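(* Let $G$ be a group acting as a convergence group on a compact Hausdorff space $X$ with at least $3$ points. Then $(X,G)$ is null.
   Context: A net $\{s_i\}_{i\in I}$ in $G$ is wandering if for every $s\in G$, $s_i\neq s$ for all sufficiently large $i$. $G$ acts as a (discrete) convergence group on $X$ if the action is by homeomorphisms and for every wandering net $\{s_i\}$ in $G$ there exist $x,y\in X$ and a subnet $\{s_j\}_{j\in J}$ such that $s_jK\to y$ as $j\to\infty$ for every compact $K\subseteq X\setminus\{x\}$. For a sequence $\mathfrak s=\{s_n\}$ in $G$ and a finite open cover ${\mathcal U}$ of $X$, ${\rm h}_{\rm top}(X,{\mathcal U};\mathfrak s)=\limsup_{n\to\infty}\frac1n\log N(\bigvee_{i=1}^ns_i^{-1}{\mathcal U})$, with $N(\cdot)$ the minimal cardinality of a subcover. $(X,G)$ is null if ${\rm h}_{\rm top}(X,{\mathcal U};\mathfrak s)=0$ for all finite open covers ${\mathcal U}$ and all sequences $\mathfrak s$ in $G$. *)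

theory Defs
  imports "HOL-Analysis.Analysis" "HOL-Algebra.Group_Action"
begin

text \<open>Action of a (discrete) group G by homeomorphisms on the whole space UNIV.
 Inverses of the maps are again maps of the action, so continuity of every
 map gives homeomorphisms.\<close>
definition homeo_action :: "('g, 'b) monoid_scheme \<Rightarrow> ('g \<Rightarrow> 'a::topological_space \<Rightarrow> 'a) \<Rightarrow> bool" where
  "homeo_action G \<phi> \<longleftrightarrow> group_action G UNIV \<phi> \<and> (\<forall>g\<in>carrier G. continuous_on UNIV (\<phi> g))"

text \<open>Nets in G are represented by their (proper) image filters on G; a subnet
 corresponds to a finer proper filter. A net is wandering iff each element is
 eventually avoided.\<close>
definition wandering :: "('g, 'b) monoid_scheme \<Rightarrow> 'g filter \<Rightarrow> bool" where
  "wandering G F \<longleftrightarrow> F \<noteq> bot \<and> eventually (\<lambda>g. g \<in> carrier G) F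
      \<and> (\<forall>s\<in>carrier G. eventually (\<lambda>g. g \<noteq> s) F)"

definition sets_converge_to :: "('g \<Rightarrow> 'a::topological_space \<Rightarrow> 'a) \<Rightarrow> 'a set \<Rightarrow> 'a \<Rightarrow> 'g filter \<Rightarrow> bool" where
  "sets_converge_to \<phi> K y F \<longleftrightarrow> (\<forall>U. open U \<and> y \<in> U \<longrightarrow> eventually (\<lambda>g. \<phi> g ` K \<subseteq> U) F)"

definition convergence_group :: "('g, 'b) monoid_scheme \<Rightarrow> ('g \<Rightarrow> 'a::topological_space \<Rightarrow> 'a) \<Rightarrow> bool" where
  "convergence_group G \<phi> \<longleftrightarrow> homeo_action G \<phi> \<and>
     (\<forall>F. wandering G F \<longrightarrow>
        (\<exists>x y F'. F' \<noteq> bot \<and> F' \<le> F \<and>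
           (\<forall>K. compact K \<and> K \<subseteq> UNIV - {x} \<longrightarrow> sets_converge_to \<phi> K y F')))"

definition open_cover :: "'a::topological_space set set \<Rightarrow> bool" where
  "open_cover \<U> \<longleftrightarrow> finite \<U> \<and> (\<forall>U\<in>\<U>. open U) \<and> \<Union>\<U> = UNIV"

definition cover_num :: "'a set set \<Rightarrow> nat" where
  "cover_num \<C> = (LEAST k. \<exists>\<D>. \<D> \<subseteq> \<C> \<and> finite \<D> \<and> card \<D> = k \<and> \<Union>\<D> = UNIV)"

definition join_cover :: "('g \<Rightarrow> 'a \<Rightarrow> 'a) \<Rightarrow> (nat \<Rightarrow> 'g) \<Rightarrow> 'a set set \<Rightarrow> nat \<Rightarrow> 'a set set" where
  "join_cover \<phi> s \<U> n = {(\<Inter>i\<in>{1..n}. \<phi> (s i) -` V i) | V. \<forall>i\<in>{1..n}. V i \<in> \<U>}"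

definition seq_entropy :: "('g \<Rightarrow> 'a \<Rightarrow> 'a) \<Rightarrow> 'a set set \<Rightarrow> (nat \<Rightarrow> 'g) \<Rightarrow> ereal" where
  "seq_entropy \<phi> \<U> s = limsup (\<lambda>n. ereal (ln (real (cover_num (join_cover \<phi> s \<U> n))) / real n))"

definition null_system :: "('g, 'b) monoid_scheme \<Rightarrow> ('g \<Rightarrow> 'a::topological_space \<Rightarrow> 'a) \<Rightarrow> bool" where
  "null_system G \<phi> \<longleftrightarrow> (\<forall>\<U> s. open_cover \<U> \<and> (\<forall>n. s n \<in> carrier G) \<longrightarrow> seq_entropy \<phi> \<U> s = 0)"

end

theory Submission
  imports Defs
begin


definition Jset :: "('g \<Rightarrow> 'a set \<Rightarrow> 'a set) \<Rightarrow> 'a set set \<Rightarrow> 'g set \<Rightarrow> 'a set set" where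
  "Jset P U T = {(\<Inter>h\<in>T. P h (\<sigma> h)) | \<sigma>. \<forall>h\<in>T. \<sigma> h \<in> U}"

lemma Jset_triv:
  assumes "finite T" "finite U" "\<forall>h\<in>T. \<forall>x. \<exists>V\<in>U. x \<in> P h V"
  shows "finite (Jset P U T) \<and> \<Union>(Jset P U T) = UNIV \<and> card (Jset P U T) \<le> card U ^ card T"
proof -
  have eq: "Jset P U T = (\<lambda>\<sigma>. \<Inter>h\<in>T. P h (\<sigma> h)) ` (T \<rightarrow>\<^sub>E U)"
  proof
    show "Jset P U T \<subseteq> (\<lambda>\<sigma>. \<Inter>h\<in>T. P h (\<sigma> h)) ` (T \<rightarrow>\<^sub>E U)"
    proof
      fix S assume "S \<in> Jset P U T"
      then obtain \<sigma> where s: "S = (\<Inter>h\<in>T. P h (\<sigma> h))" "\<forall>h\<in>T. \<sigma> h \<in> U"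
        unfolding Jset_def by blast
      have "restrict \<sigma> T \<in> T \<rightarrow>\<^sub>E U" using s(2) by auto
      moreover have "S = (\<Inter>h\<in>T. P h (restrict \<sigma> T h))" using s(1) by simp
      ultimately show "S \<in> (\<lambda>\<sigma>. \<Inter>h\<in>T. P h (\<sigma> h)) ` (T \<rightarrow>\<^sub>E U)" by blast
    qed
    show "(\<lambda>\<sigma>. \<Inter>h\<in>T. P h (\<sigma> h)) ` (T \<rightarrow>\<^sub>E U) \<subseteq> Jset P U T"
      unfolding Jset_def by (auto simp: PiE_def Pi_def)
  qed
  have fin: "finite (T \<rightarrow>\<^sub>E U)" using assms by (simp add: finite_PiE)
  have "card (Jset P U T) \<le> card (T \<rightarrow>\<^sub>E U)" unfolding eq using fin by (rule card_image_le)
  also have "\<dots> = card U ^ card T" using assms by (simp add: card_PiE)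
  finally have c: "card (Jset P U T) \<le> card U ^ card T" .
  have "\<forall>x. x \<in> \<Union>(Jset P U T)"
  proof
    fix x
    define \<sigma> where "\<sigma> = (\<lambda>h. SOME V. V \<in> U \<and> x \<in> P h V)"
    have "\<forall>h\<in>T. \<sigma> h \<in> U \<and> x \<in> P h (\<sigma> h)"
      unfolding \<sigma>_def using assms(3) by (metis (mono_tags, lifting) someI_ex)
    then have "(\<Inter>h\<in>T. P h (\<sigma> h)) \<in> Jset P U T" "x \<in> (\<Inter>h\<in>T. P h (\<sigma> h))"
      unfolding Jset_def by auto
    then show "x \<in> \<Union>(Jset P U T)" by blast
  qed
  then have "\<Union>(Jset P U T) = UNIV" by blast
  with c fin eq show ?thesis by simp
qed

lemma Jset_insert:
  assumes "S \<in> Jset P U T" "a \<in> U" "g \<notin> T"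
  shows "S \<inter> P g a \<in> Jset P U (insert g T)"
proof -
  obtain \<sigma> where s: "S = (\<Inter>h\<in>T. P h (\<sigma> h))" "\<forall>h\<in>T. \<sigma> h \<in> U"
    using assms(1) unfolding Jset_def by blast
  have "(\<Inter>h\<in>T. P h ((\<sigma>(g:=a)) h)) = (\<Inter>h\<in>T. P h (\<sigma> h))"
    using assms(3) by (intro INF_cong) auto
  then have "S \<inter> P g a = (\<Inter>h\<in>insert g T. P h ((\<sigma>(g:=a)) h))"
    using s(1) by auto
  moreover have "\<forall>h\<in>insert g T. (\<sigma>(g:=a)) h \<in> U" using s(2) assms(2) by auto
  ultimately show ?thesis unfolding Jset_def by blast
qed

lemma Jset_union:
  assumes "S \<in> Jset P U T" "R \<in> Jset P U Q" "T \<inter> Q = {}"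
  shows "S \<inter> R \<in> Jset P U (T \<union> Q)"
proof -
  obtain \<sigma> where s: "S = (\<Inter>h\<in>T. P h (\<sigma> h))" "\<forall>h\<in>T. \<sigma> h \<in> U"
    using assms(1) unfolding Jset_def by blast
  obtain \<tau> where t: "R = (\<Inter>h\<in>Q. P h (\<tau> h))" "\<forall>h\<in>Q. \<tau> h \<in> U"
    using assms(2) unfolding Jset_def by blast
  define \<rho> where "\<rho> = (\<lambda>h. if h \<in> T then \<sigma> h else \<tau> h)"
  have e1: "(\<Inter>h\<in>T. P h (\<rho> h)) = S" unfolding s(1) \<rho>_def by (intro INF_cong) auto
  have e2: "(\<Inter>h\<in>Q. P h (\<rho> h)) = R" unfolding t(1) \<rho>_def using assms(3) by (intro INF_cong) auto
  have "S \<inter> R = (\<Inter>h\<in>T \<union> Q. P h (\<rho> h))"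
    unfolding INT_Un e1 e2 ..
  moreover have "\<forall>h\<in>T \<union> Q. \<rho> h \<in> U" using s(2) t(2) unfolding \<rho>_def by auto
  ultimately show ?thesis unfolding Jset_def by blast
qed

lemma Jset_point:
  assumes "\<forall>h\<in>Q. \<tau> h \<in> U"
  shows "(\<Inter>h\<in>Q. P h (\<tau> h)) \<in> Jset P U Q"
  using assms unfolding Jset_def by blast

lemma pigeon:
  assumes "finite Q" "finite U" "U \<noteq> {}" "\<forall>h\<in>Q. f h \<in> U"
  shows "\<exists>a\<in>U. card Q \<le> card U * card {h\<in>Q. f h = a}"
proof (rule ccontr)
  assume "\<not> ?thesis"
  then have lt: "\<forall>a\<in>U. card U * card {h\<in>Q. f h = a} < card Q" by auto
  have "Q = (\<Union>a\<in>U. {h\<in>Q. f h = a})" using assms(4) by auto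
  then have "card Q \<le> (\<Sum>a\<in>U. card {h\<in>Q. f h = a})"
    by (metis card_UN_le assms(2))
  then have "card U * card Q \<le> (\<Sum>a\<in>U. card U * card {h\<in>Q. f h = a})"
    by (metis mult_le_mono2 sum_distrib_left)
  also have "\<dots> < (\<Sum>a\<in>U. card Q)"
    using lt assms(2,3) by (intro sum_strict_mono) auto
  also have "\<dots> = card U * card Q" by simp
  finally show False by simp
qed



lemma count_main:
  fixes P :: "'g \<Rightarrow> 'a set \<Rightarrow> 'a set" and Gc :: "'g set" and good :: "'g \<Rightarrow> 'g \<Rightarrow> bool"
    and e :: nat and \<epsilon> :: real
  assumes finU: "finite U" and neU: "U \<noteq> {}"
    and cov: "\<forall>h\<in>Gc. \<forall>x. \<exists>V\<in>U. x \<in> P h V"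
    and bad: "\<forall>g\<in>Gc. finite {h\<in>Gc. \<not> good g h} \<and> card {h\<in>Gc. \<not> good g h} \<le> e"
    and goodD: "\<forall>g h. good g h \<longrightarrow> (\<exists>a\<in>U. \<exists>b\<in>U. \<forall>x. x \<in> P g a \<or> x \<in> P h b)"
    and eps: "\<epsilon> > 0"
  shows "\<exists>C. \<forall>T. T \<subseteq> Gc \<longrightarrow> finite T \<longrightarrow>
     (\<exists>D \<subseteq> Jset P U T. finite D \<and> \<Union>D = UNIV \<and> real (card D) \<le> C * exp (\<epsilon> * real (card T)))"
proof -
  define k where "k = card U"
  have k1: "k \<ge> 1" using finU neU k_def by (simp add: Suc_le_eq card_gt_0_iff)
  have ex1: "exp (-\<epsilon>) < 1" using eps by simp
  define L where "L = ln (real k / (1 - exp (-\<epsilon>)))"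
  define M where "M = 1 + real e + (real k / \<epsilon>) * L"
  define N where "N = nat \<lceil>M\<rceil> + 1"
  have NM: "real N \<ge> M" "N \<ge> 1" unfolding N_def by linarith+
  have key: "exp (-\<epsilon>) + real k * exp (-\<epsilon> * real q) \<le> 1"
    if n: "n \<ge> N" and q: "real k * real q \<ge> real n - 1 - real e" for n q :: nat
  proof -
    have "real q \<ge> (real n - 1 - real e) / real k" using q k1
      by (simp add: divide_le_eq mult.commute)
    moreover have "(real n - 1 - real e)/real k \<ge> (M - 1 - real e)/real k"
      using n NM k1 by (intro divide_right_mono) auto
    moreover have "(M - 1 - real e)/real k = L / \<epsilon>" unfolding M_def using k1 eps
      by (simp add: field_simps)
    ultimately have "L / \<epsilon> \<le> real q" by linarith
    then have "L \<le> \<epsilon> * real q" using eps by (simp add: divide_le_eq mult.commute)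
    then have "exp (-\<epsilon> * real q) \<le> exp (-L)" by simp
    also have "exp (-L) = (1 - exp (-\<epsilon>)) / real k" unfolding L_def using ex1 k1
      by (simp add: exp_minus)
    finally have "real k * exp (-\<epsilon> * real q) \<le> 1 - exp (-\<epsilon>)" using k1
      by (simp add: field_simps)
    then show ?thesis by simp
  qed
  define C where "C = real k ^ N"
  have main: "\<forall>T. T \<subseteq> Gc \<longrightarrow> finite T \<longrightarrow> card T = n \<longrightarrow>
     (\<exists>D \<subseteq> Jset P U T. finite D \<and> \<Union>D = UNIV \<and> real (card D) \<le> C * exp (\<epsilon> * real n))" for n
  proof (induction n rule: less_induct)
    case (less n)
    show ?case
    proof (intro allI impI)
      fix T assume TG: "T \<subseteq> Gc" and finT: "finite T" and cT: "card T = n"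
      show "\<exists>D \<subseteq> Jset P U T. finite D \<and> \<Union>D = UNIV \<and> real (card D) \<le> C * exp (\<epsilon> * real n)"
      proof (cases "n < N")
        case True
        have tr: "finite (Jset P U T) \<and> \<Union>(Jset P U T) = UNIV \<and> card (Jset P U T) \<le> card U ^ card T"
          using Jset_triv[of T U P] finT finU cov TG by blast
        then have "real (card (Jset P U T)) \<le> real k ^ n" using k_def cT
          by (metis of_nat_le_iff of_nat_power)
        also have "\<dots> \<le> real k ^ N" using True k1 by (intro power_increasing) auto
        also have "\<dots> \<le> C * exp (\<epsilon> * real n)"
        proof -
          have "1 \<le> exp (\<epsilon> * real n)" using eps by simp
          then show ?thesis unfolding C_def
            by (metis mult.right_neutral mult_left_mono zero_le_power of_nat_0_le_iff)
        qed
        finally show ?thesis using tr by blast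
      next
        case False
        then have nN: "n \<ge> N" by simp
        then have "T \<noteq> {}" using NM cT by auto
        then obtain g where gT: "g \<in> T" by blast
        define T' where "T' = T - {g}"
        have finT': "finite T'" using finT T'_def by simp
        have cT': "card T' = n - 1" using cT gT finT T'_def by simp
        define Q where "Q = {h\<in>T'. good g h}"
        define B where "B = {h\<in>Gc. \<not> good g h}"
        have finB: "finite B" and cB: "card B \<le> e" using bad gT TG B_def by auto
        have finQ: "finite Q" using finT' Q_def by simp
        have "T' \<subseteq> Q \<union> B" using TG T'_def Q_def B_def by auto
        then have "card T' \<le> card (Q \<union> B)" using finQ finB by (intro card_mono) auto
        also have "\<dots> \<le> card Q + card B" by (rule card_Un_le)
        finally have cQ: "n - 1 \<le> card Q + e" using cB cT' by simp
        have "\<forall>h\<in>Q. \<exists>ab. fst ab \<in> U \<and> snd ab \<in> U \<and> (\<forall>x. x \<in> P g (fst ab) \<or> x \<in> P h (snd ab))"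
          using goodD Q_def by fastforce
        then obtain fab where fab: "\<forall>h\<in>Q. fst (fab h) \<in> U \<and> snd (fab h) \<in> U \<and>
            (\<forall>x. x \<in> P g (fst (fab h)) \<or> x \<in> P h (snd (fab h)))"
          by metis
        define fa where "fa = (\<lambda>h. fst (fab h))"
        define fb where "fb = (\<lambda>h. snd (fab h))"
        obtain a where aU: "a \<in> U" and pa: "card Q \<le> k * card {h\<in>Q. fa h = a}"
          using pigeon[of Q U fa] finQ finU neU fab k_def fa_def by blast
        define Qa where "Qa = {h\<in>Q. fa h = a}"
        define q where "q = card Qa"
        have QaT': "Qa \<subseteq> T'" using Qa_def Q_def by auto
        have gQa: "g \<notin> Qa" using QaT' T'_def by auto
        define T'' where "T'' = T' - Qa"
        have finT'': "finite T''" using finT' T''_def by simp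
        have qle: "q \<le> n - 1" using QaT' finT' cT' q_def by (metis card_mono)
        have cT'': "card T'' = n - 1 - q" using QaT' finT' cT' q_def T''_def
          by (simp add: card_Diff_subset finite_subset)
        have n1: "n \<ge> 1" using nN NM by simp
        obtain D1 where D1: "D1 \<subseteq> Jset P U T'" "finite D1" "\<Union>D1 = UNIV"
            "real (card D1) \<le> C * exp (\<epsilon> * real (n-1))"
          using less.IH[rule_format, of "n-1" T'] n1 finT' cT' TG T'_def by auto
        obtain D2 where D2: "D2 \<subseteq> Jset P U T''" "finite D2" "\<Union>D2 = UNIV"
            "real (card D2) \<le> C * exp (\<epsilon> * real (n-1-q))"
          using less.IH[rule_format, of "n-1-q" T''] n1 finT'' cT'' TG T'_def T''_def by auto
        define R where "R = (\<lambda>V. P g V \<inter> (\<Inter>h\<in>Qa. P h (fb h)))"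
        define D where "D = (\<lambda>S. S \<inter> P g a) ` D1 \<union> (\<Union>V\<in>U. (\<lambda>S. S \<inter> R V) ` D2)"
        have Teq: "insert g T' = T" using gT T'_def by auto
        have Teq2: "T'' \<union> insert g Qa = T" using gT T'_def T''_def QaT' by auto
        have RJ: "R V \<in> Jset P U (insert g Qa)" if "V \<in> U" for V
        proof -
          have "(\<Inter>h\<in>Qa. P h ((fb(g:=V)) h)) = (\<Inter>h\<in>Qa. P h (fb h))"
            using gQa by (intro INF_cong) auto
          then have "R V = (\<Inter>h\<in>insert g Qa. P h ((fb(g:=V)) h))" unfolding R_def by simp
          moreover have "\<forall>h\<in>insert g Qa. (fb(g:=V)) h \<in> U"
            using that fab Qa_def fb_def by auto
          ultimately show ?thesis using Jset_point by metis
        qed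
        have "D \<subseteq> Jset P U T"
        proof
          fix Z assume "Z \<in> D"
          then consider (a) S where "S \<in> D1" "Z = S \<inter> P g a"
            | (b) S V where "S \<in> D2" "V \<in> U" "Z = S \<inter> R V"
            unfolding D_def by blast
          then show "Z \<in> Jset P U T"
          proof cases
            case a
            then show ?thesis using Jset_insert[of S P U T' a g] D1 aU T'_def Teq by auto
          next
            case b
            have "T'' \<inter> insert g Qa = {}" using T''_def T'_def by auto
            then show ?thesis using Jset_union[of S P U T'' "R V" "insert g Qa"] b D2 RJ Teq2
              by auto
          qed
        qed
        moreover have "finite D" unfolding D_def using D1 D2 finU by auto
        moreover have "\<Union>D = UNIV"
        proof -
          have gG: "g \<in> Gc" using TG gT by (rule subsetD)
          have "x \<in> \<Union>D" for x
          proof (cases "x \<in> P g a")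
            case True
            have "x \<in> \<Union>D1" using D1(3) by simp
            then obtain S where S: "S \<in> D1" "x \<in> S" by (rule UnionE)
            have "S \<inter> P g a \<in> D" unfolding D_def using S(1) by (intro UnI1 imageI)
            moreover have "x \<in> S \<inter> P g a" using S(2) True by (rule IntI)
            ultimately show ?thesis by (rule UnionI)
          next
            case False
            have xQ: "x \<in> P h (fb h)" if h: "h \<in> Qa" for h
            proof -
              have hQ: "h \<in> Q" and ha: "fa h = a" using h unfolding Qa_def by simp_all
              have "\<forall>x. x \<in> P g (fa h) \<or> x \<in> P h (fb h)"
              proof -
                have "fst (fab h) \<in> U \<and> snd (fab h) \<in> U \<and>
                  (\<forall>x. x \<in> P g (fst (fab h)) \<or> x \<in> P h (snd (fab h)))" using fab hQ by (rule bspec)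
                then show ?thesis unfolding fa_def fb_def by (elim conjE)
              qed
              then have "x \<in> P g a \<or> x \<in> P h (fb h)" unfolding ha by (rule spec)
              then show "x \<in> P h (fb h)" using False by simp
            qed
            have "\<exists>V\<in>U. x \<in> P g V" using cov gG by simp
            then obtain V where V: "V \<in> U" "x \<in> P g V" by (rule bexE)
            have "x \<in> \<Union>D2" using D2(3) by simp
            then obtain S where S: "S \<in> D2" "x \<in> S" by (rule UnionE)
            have "x \<in> (\<Inter>h\<in>Qa. P h (fb h))" using xQ by (rule INT_I)
            then have "x \<in> S \<inter> R V" unfolding R_def using S(2) V(2) by (intro IntI)
            moreover have "S \<inter> R V \<in> D" unfolding D_def
              by (intro UnI2 UN_I[OF V(1)] imageI S(1))
            ultimately show ?thesis by (rule UnionI[rotated])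
          qed
          then show ?thesis by auto
        qed
        moreover have cD: "card D \<le> card D1 + k * card D2"
        proof -
          have "card D \<le> card ((\<lambda>S. S \<inter> P g a) ` D1) + card (\<Union>V\<in>U. (\<lambda>S. S \<inter> R V) ` D2)"
            unfolding D_def by (rule card_Un_le)
          also have "\<dots> \<le> card D1 + (\<Sum>V\<in>U. card ((\<lambda>S. S \<inter> R V) ` D2))"
            by (rule add_mono[OF card_image_le[OF D1(2)] card_UN_le[OF finU]])
          also have "\<dots> \<le> card D1 + (\<Sum>V\<in>U. card D2)"
            using card_image_le[OF D2(2)] by (intro add_mono sum_mono) simp_all
          finally show ?thesis using k_def by simp
        qed
        moreover have rD: "real (card D1 + k * card D2) \<le> C * exp (\<epsilon> * real n)"
        proof -
          have kq: "real k * real q \<ge> real n - 1 - real e"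
          proof -
            have "real (n - 1) \<le> real (card Q) + real e" using cQ by linarith
            moreover have "card Q \<le> k * q" using pa unfolding q_def Qa_def .
            then have "real (card Q) \<le> real k * real q" by (simp flip: of_nat_mult)
            ultimately show ?thesis using n1 by (simp add: of_nat_diff)
          qed
          have Cpos: "C \<ge> 0" unfolding C_def by simp
          have r1: "real (n - 1) = real n - 1" using n1 by (simp add: of_nat_diff)
          have r2: "real (n - 1 - q) = real n - 1 - real q" using n1 qle by (simp add: of_nat_diff)
          have e1: "C * exp (\<epsilon> * real (n-1)) = C * exp (\<epsilon> * real n) * exp (-\<epsilon>)"
          proof -
            have "\<epsilon> * real (n-1) = \<epsilon> * real n + (-\<epsilon>)" unfolding r1 by (simp add: right_diff_distrib)
            then have "exp (\<epsilon> * real (n-1)) = exp (\<epsilon> * real n) * exp (-\<epsilon>)"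
              by (simp only: exp_add)
            then show ?thesis by (simp only: mult.assoc)
          qed
          have e2: "C * exp (\<epsilon> * real (n-1-q)) \<le> C * exp (\<epsilon> * real n) * exp (-\<epsilon> * real q)"
          proof -
            have "\<epsilon> * real (n-1-q) \<le> \<epsilon> * real n + (-\<epsilon> * real q)" unfolding r2 using eps
              by (simp add: right_diff_distrib)
            then have "exp (\<epsilon> * real (n-1-q)) \<le> exp (\<epsilon> * real n + (-\<epsilon> * real q))"
              by (simp only: exp_le_cancel_iff)
            then have "exp (\<epsilon> * real (n-1-q)) \<le> exp (\<epsilon> * real n) * exp (-\<epsilon> * real q)"
              by (simp only: exp_add)
            then show ?thesis using Cpos by (simp only: mult.assoc mult_left_mono)
          qed
          have "real (card D1 + k * card D2) = real (card D1) + real k * real (card D2)" by simp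
          also have "\<dots> \<le> C * exp (\<epsilon> * real n) * exp (-\<epsilon>)
               + real k * (C * exp (\<epsilon> * real n) * exp (-\<epsilon> * real q))"
          proof (rule add_mono)
            show "real (card D1) \<le> C * exp (\<epsilon> * real n) * exp (-\<epsilon>)" using D1(4) unfolding e1 .
            have "real (card D2) \<le> C * exp (\<epsilon> * real n) * exp (-\<epsilon> * real q)"
              using D2(4) e2 by (rule order_trans)
            then show "real k * real (card D2) \<le> real k * (C * exp (\<epsilon> * real n) * exp (-\<epsilon> * real q))"
              by (rule mult_left_mono) simp
          qed
          also have "\<dots> = C * exp (\<epsilon> * real n) * (exp (-\<epsilon>) + real k * exp (-\<epsilon> * real q))"
            by (simp only: distrib_left mult.assoc mult.left_commute)
          also have "\<dots> \<le> C * exp (\<epsilon> * real n) * 1"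
          proof (rule mult_left_mono)
            show "exp (-\<epsilon>) + real k * exp (-\<epsilon> * real q) \<le> 1" using key[OF nN kq] .
            show "0 \<le> C * exp (\<epsilon> * real n)" using Cpos by simp
          qed
          finally show ?thesis by simp
        qed
        moreover have "real (card D) \<le> C * exp (\<epsilon> * real n)"
          using cD rD by (meson of_nat_le_iff order_trans)
        ultimately show ?thesis by blast
      qed
    qed
  qed
  show ?thesis using main by blast
qed



lemma lemmaA:
  fixes G :: "('g,'b) monoid_scheme" and \<phi> :: "'g \<Rightarrow> 'a::topological_space \<Rightarrow> 'a"
  assumes conv: "convergence_group G \<phi>" and comp: "compact (UNIV :: 'a set)" and oc: "open_cover U"
  shows "\<exists>E. finite E \<and> (\<forall>g\<in>carrier G - E. \<exists>a\<in>U. \<exists>b\<in>U. \<forall>x. x \<in> a \<or> \<phi> g x \<in> b)"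
proof (rule ccontr)
  assume na: "\<not> ?thesis"
  define Bad where "Bad = {g\<in>carrier G. \<not>(\<exists>a\<in>U. \<exists>b\<in>U. \<forall>x. x \<in> a \<or> \<phi> g x \<in> b)}"
  have infB: "infinite Bad"
  proof
    assume "finite Bad"
    moreover have "\<forall>g\<in>carrier G - Bad. \<exists>a\<in>U. \<exists>b\<in>U. \<forall>x. x \<in> a \<or> \<phi> g x \<in> b"
      unfolding Bad_def by blast
    ultimately show False using na by blast
  qed
  define F where "F = inf cofinite (principal Bad)"
  have evF: "eventually P F \<longleftrightarrow> finite {g. \<not> (g \<in> Bad \<longrightarrow> P g)}" for P
    unfolding F_def eventually_inf_principal eventually_cofinite ..
  have Fnb: "F \<noteq> bot"
  proof
    assume "F = bot"
    then have "eventually (\<lambda>_. False) F" by simp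
    then have "finite Bad" unfolding evF by simp
    then show False using infB by simp
  qed
  have wF: "wandering G F"
    unfolding wandering_def
  proof (intro conjI Fnb ballI)
    show "eventually (\<lambda>g. g \<in> carrier G) F" unfolding evF Bad_def by simp
    fix s assume "s \<in> carrier G"
    have "{g. \<not> (g \<in> Bad \<longrightarrow> g \<noteq> s)} \<subseteq> {s}" by auto
    then show "eventually (\<lambda>g. g \<noteq> s) F" unfolding evF by (rule finite_subset) simp
  qed
  have "\<forall>F. wandering G F \<longrightarrow>
        (\<exists>x y F'. F' \<noteq> bot \<and> F' \<le> F \<and>
           (\<forall>K. compact K \<and> K \<subseteq> UNIV - {x} \<longrightarrow> sets_converge_to \<phi> K y F'))"
    using conv unfolding convergence_group_def by (rule conjunct2)
  then have "\<exists>x y F'. F' \<noteq> bot \<and> F' \<le> F \<and>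
           (\<forall>K. compact K \<and> K \<subseteq> UNIV - {x} \<longrightarrow> sets_converge_to \<phi> K y F')"
    using wF by simp
  then obtain x y F' where F': "F' \<noteq> bot" "F' \<le> F"
    and cv: "\<forall>K. compact K \<and> K \<subseteq> UNIV - {x} \<longrightarrow> sets_converge_to \<phi> K y F'"
    by (elim exE conjE)
  have covU: "\<Union>U = UNIV" and opU: "\<forall>V\<in>U. open V" using oc unfolding open_cover_def by simp_all
  have "x \<in> \<Union>U" using covU by simp
  then obtain a where a: "a \<in> U" "x \<in> a" by (rule UnionE)
  have "y \<in> \<Union>U" using covU by simp
  then obtain b where b: "b \<in> U" "y \<in> b" by (rule UnionE)
  have oa: "open a" using opU a(1) by simp
  have ob: "open b" using opU b(1) by simp
  have "compact (UNIV \<inter> - a)" using comp oa by (intro compact_Int_closed) (simp_all add: closed_Compl)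
  then have ca: "compact (- a)" by simp
  have sa: "- a \<subseteq> UNIV - {x}" using a(2) by auto
  have "sets_converge_to \<phi> (- a) y F'" using cv ca sa by simp
  then have e1: "eventually (\<lambda>g. \<phi> g ` (- a) \<subseteq> b) F'"
    unfolding sets_converge_to_def using ob b(2) by simp
  have "eventually (\<lambda>g. g \<in> Bad) F" unfolding evF by simp
  then have e2: "eventually (\<lambda>g. g \<in> Bad) F'" by (rule filter_leD[OF F'(2)])
  have "eventually (\<lambda>g. False) F'"
    using e1 e2
  proof eventually_elim
    case (elim g)
    have "\<forall>z. z \<in> a \<or> \<phi> g z \<in> b" using elim(1) by blast
    then show False using elim(2) a(1) b(1) unfolding Bad_def by blast
  qed
  then show False using F'(1) by simp
qed

lemma limsup_zero:
  fixes c :: "nat \<Rightarrow> nat"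
  assumes c1: "\<forall>n. c n \<ge> 1" and cb: "\<forall>\<epsilon>>0. \<exists>C. \<forall>n. real (c n) \<le> C * exp (\<epsilon> * real n)"
  shows "limsup (\<lambda>n. ereal (ln (real (c n)) / real n)) = 0"
proof -
  have nn: "0 \<le> ln (real (c n)) / real n" for n
    using c1 by (intro divide_nonneg_nonneg) auto
  have lo: "0 \<le> liminf (\<lambda>n. ereal (ln (real (c n)) / real n))"
    by (intro Liminf_bounded always_eventually) (simp add: nn)
  have "liminf (\<lambda>n. ereal (ln (real (c n)) / real n)) \<le> limsup (\<lambda>n. ereal (ln (real (c n)) / real n))"
    by (intro Liminf_le_Limsup) simp
  with lo have lo2: "0 \<le> limsup (\<lambda>n. ereal (ln (real (c n)) / real n))" by simp
  have up: "limsup (\<lambda>n. ereal (ln (real (c n)) / real n)) \<le> 0"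
  proof (rule ereal_le_epsilon2)
    fix e :: real assume e: "0 < e"
    obtain C where C: "\<forall>n. real (c n) \<le> C * exp (e / 2 * real n)" using cb e by (meson half_gt_zero)
    have C1: "C \<ge> 1"
    proof -
      have "real (c 0) \<le> C" using C[rule_format, of 0] by simp
      moreover have "1 \<le> real (c 0)" using c1 by simp
      ultimately show ?thesis by linarith
    qed
    define N where "N = nat \<lceil>2 * ln C / e\<rceil> + 1"
    have "eventually (\<lambda>n. ln (real (c n)) / real n \<le> e) sequentially"
      unfolding eventually_sequentially
    proof (intro exI allI impI)
      fix n assume nN: "N \<le> n"
      have npos: "real n > 0" using nN N_def by simp
      have nge: "real n \<ge> 2 * ln C / e" using nN N_def by linarith
      have "ln (real (c n)) \<le> ln (C * exp (e / 2 * real n))"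
      proof -
        have p1: "0 < real (c n)" using c1[rule_format, of n] by simp
        have p2: "0 < C * exp (e / 2 * real n)" using C1 by simp
        show ?thesis using ln_le_cancel_iff[OF p1 p2] C by blast
      qed
      also have "\<dots> = ln C + e / 2 * real n" using C1 by (simp add: ln_mult)
      also have "\<dots> \<le> e * real n"
      proof -
        have "2 * ln C / e * e \<le> real n * e" using nge e by (intro mult_right_mono) auto
        then have "2 * ln C \<le> real n * e" using e by simp
        then have "2 * ln C \<le> e * real n" by (simp add: mult.commute)
        then show ?thesis by linarith
      qed
      finally show "ln (real (c n)) / real n \<le> e" using npos by (simp add: divide_le_eq)
    qed
    then have "limsup (\<lambda>n. ereal (ln (real (c n)) / real n)) \<le> ereal e"
      by (intro Limsup_bounded) (auto elim: eventually_mono)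
    then show "limsup (\<lambda>n. ereal (ln (real (c n)) / real n)) \<le> 0 + ereal e" by simp
  qed
  from up lo2 show ?thesis by (rule antisym)
qed



theorem theorem12p2:
  fixes G :: "('g, 'b) monoid_scheme" and \<phi> :: "'g \<Rightarrow> 'a::t2_space \<Rightarrow> 'a"
  assumes "group G"
    and "compact (UNIV :: 'a set)"
    and "\<exists>a b c :: 'a. a \<noteq> b \<and> a \<noteq> c \<and> b \<noteq> c"
    and "convergence_group G \<phi>"
  shows "null_system G \<phi>"
  unfolding null_system_def
proof (intro allI impI)
  fix U :: "'a set set" and s :: "nat \<Rightarrow> 'g" assume H: "open_cover U \<and> (\<forall>n. s n \<in> carrier G)"
  have grpA: "group_action G UNIV \<phi>" using assms(4)
    unfolding convergence_group_def homeo_action_def by (elim conjE)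
  have grp: "group G" by (rule assms(1))
  have oc: "open_cover U" using H by (rule conjunct1)
  have finU: "finite U" and covU: "\<Union>U = UNIV" using oc unfolding open_cover_def by simp_all
  have neU: "U \<noteq> {}" using covU by auto
  have sG: "\<forall>n. s n \<in> carrier G" using H by (rule conjunct2)
  obtain E where finE: "finite E"
    and EE: "\<forall>g\<in>carrier G - E. \<exists>a\<in>U. \<exists>b\<in>U. \<forall>x. x \<in> a \<or> \<phi> g x \<in> b"
    using lemmaA[OF assms(4) assms(2) oc] by (elim exE conjE)
  define P where "P = (\<lambda>g V. \<phi> g -` V)"
  define good where "good = (\<lambda>g h. \<exists>a\<in>U. \<exists>b\<in>U. \<forall>x. x \<in> P g a \<or> x \<in> P h b)"
  have cov: "\<forall>h\<in>carrier G. \<forall>x. \<exists>V\<in>U. x \<in> P h V"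
  proof (intro ballI allI)
    fix h x
    have "\<phi> h x \<in> \<Union>U" using covU by simp
    then show "\<exists>V\<in>U. x \<in> P h V" unfolding P_def by auto
  qed
  have badsub: "{h\<in>carrier G. \<not> good g h} \<subseteq> (\<lambda>e. e \<otimes>\<^bsub>G\<^esub> g) ` E" if gG: "g \<in> carrier G" for g
  proof
    fix h assume "h \<in> {h\<in>carrier G. \<not> good g h}"
    then have hG: "h \<in> carrier G" and ng: "\<not> good g h" by auto
    define g' where "g' = h \<otimes>\<^bsub>G\<^esub> inv\<^bsub>G\<^esub> g"
    interpret group G by (rule grp)
    have g'G: "g' \<in> carrier G" unfolding g'_def using hG gG by simp
    have hg: "g' \<otimes>\<^bsub>G\<^esub> g = h" unfolding g'_def using hG gG by (simp add: m_assoc)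
    have "g' \<in> E"
    proof (rule ccontr)
      assume "g' \<notin> E"
      then obtain a b where ab: "a \<in> U" "b \<in> U" "\<forall>y. y \<in> a \<or> \<phi> g' y \<in> b"
        using EE g'G by blast
      have "\<forall>x. x \<in> P g a \<or> x \<in> P h b"
      proof
        fix x
        have "\<phi> g' (\<phi> g x) = \<phi> h x"
          using group_action.composition_rule[OF grpA, of x g' g] g'G gG hg by simp
        then show "x \<in> P g a \<or> x \<in> P h b" using ab(3)[rule_format, of "\<phi> g x"]
          unfolding P_def by auto
      qed
      then have "good g h" unfolding good_def using ab by blast
      then show False using ng by blast
    qed
    then show "h \<in> (\<lambda>e. e \<otimes>\<^bsub>G\<^esub> g) ` E" using hg by force
  qed
  have bad: "\<forall>g\<in>carrier G. finite {h\<in>carrier G. \<not> good g h} \<and> card {h\<in>carrier G. \<not> good g h} \<le> card E"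
  proof
    fix g assume gG: "g \<in> carrier G"
    have fi: "finite ((\<lambda>e. e \<otimes>\<^bsub>G\<^esub> g) ` E)" using finE by simp
    have "card {h\<in>carrier G. \<not> good g h} \<le> card ((\<lambda>e. e \<otimes>\<^bsub>G\<^esub> g) ` E)"
      using badsub[OF gG] fi by (rule card_mono[rotated])
    also have "\<dots> \<le> card E" by (rule card_image_le[OF finE])
    finally show "finite {h\<in>carrier G. \<not> good g h} \<and> card {h\<in>carrier G. \<not> good g h} \<le> card E"
      using finite_subset[OF badsub[OF gG] fi] by blast
  qed
  have goodD: "\<forall>g h. good g h \<longrightarrow> (\<exists>a\<in>U. \<exists>b\<in>U. \<forall>x. x \<in> P g a \<or> x \<in> P h b)"
    unfolding good_def by blast
  define c where "c = (\<lambda>n. cover_num (join_cover \<phi> s U n))"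
  have Jsub: "Jset P U (s ` {1..n}) \<subseteq> join_cover \<phi> s U n" for n
  proof
    fix S assume "S \<in> Jset P U (s ` {1..n})"
    then have "\<exists>\<sigma>. S = (\<Inter>h\<in>s ` {1..n}. P h (\<sigma> h)) \<and> (\<forall>h\<in>s ` {1..n}. \<sigma> h \<in> U)"
      unfolding Jset_def by simp
    then obtain \<sigma> where \<sigma>: "S = (\<Inter>h\<in>s ` {1..n}. P h (\<sigma> h))" "\<forall>h\<in>s ` {1..n}. \<sigma> h \<in> U"
      by (elim exE conjE)
    have "S = (\<Inter>i\<in>{1..n}. \<phi> (s i) -` (\<sigma> (s i)))" unfolding \<sigma>(1) P_def by (simp add: image_image)
    moreover have "\<forall>i\<in>{1..n}. (\<lambda>i. \<sigma> (s i)) i \<in> U" using \<sigma>(2) by auto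
    ultimately show "S \<in> join_cover \<phi> s U n" unfolding join_cover_def
      by (intro CollectI exI[of _ "\<lambda>i. \<sigma> (s i)"] conjI)
  qed
  have cnb: "\<exists>D. D \<subseteq> join_cover \<phi> s U n \<and> finite D \<and> \<Union>D = UNIV \<and> real (card D) \<le> C * exp (\<epsilon> * real (card (s ` {1..n})))"
    if "\<forall>T. T \<subseteq> carrier G \<longrightarrow> finite T \<longrightarrow>
       (\<exists>D \<subseteq> Jset P U T. finite D \<and> \<Union>D = UNIV \<and> real (card D) \<le> C * exp (\<epsilon> * real (card T)))"
    for C \<epsilon> n
  proof -
    have sub: "s ` {1..n} \<subseteq> carrier G" using sG by auto
    have fin: "finite (s ` {1..n})" by simp
    have "\<exists>D \<subseteq> Jset P U (s ` {1..n}). finite D \<and> \<Union>D = UNIV \<and> real (card D) \<le> C * exp (\<epsilon> * real (card (s ` {1..n})))"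
      using that sub fin by simp
    then obtain D where "D \<subseteq> Jset P U (s ` {1..n})" "finite D" "\<Union>D = UNIV"
      "real (card D) \<le> C * exp (\<epsilon> * real (card (s ` {1..n})))"
      by (elim exE conjE)
    moreover have "D \<subseteq> join_cover \<phi> s U n" using calculation(1) Jsub[of n] by (rule subset_trans)
    ultimately show ?thesis by (intro exI[of _ D] conjI)
  qed
  have cle: "c n \<le> card D" if "D \<subseteq> join_cover \<phi> s U n" "finite D" "\<Union>D = UNIV" for n D
    unfolding c_def cover_num_def using that by (intro Least_le) blast
  have c1: "\<forall>n. c n \<ge> 1"
  proof
    fix n
    obtain C where C: "\<forall>T. T \<subseteq> carrier G \<longrightarrow> finite T \<longrightarrow>
       (\<exists>D \<subseteq> Jset P U T. finite D \<and> \<Union>D = UNIV \<and> real (card D) \<le> C * exp (1 * real (card T)))"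
      using count_main[OF finU neU cov bad goodD, of 1] by auto
    obtain D0 where "D0 \<subseteq> join_cover \<phi> s U n \<and> finite D0 \<and> \<Union>D0 = UNIV"
      using cnb[OF C, of n] by blast
    then have ex: "\<exists>k. \<exists>D. D \<subseteq> join_cover \<phi> s U n \<and> finite D \<and> card D = k \<and> \<Union>D = UNIV" by blast
    obtain D where D: "D \<subseteq> join_cover \<phi> s U n" "finite D" "card D = c n" "\<Union>D = UNIV"
      using LeastI_ex[OF ex] unfolding c_def cover_num_def by blast
    show "c n \<ge> 1"
    proof (rule ccontr)
      assume "\<not> c n \<ge> 1"
      then have "card D = 0" using D(3) by simp
      then have "D = {}" using D(2) by simp
      then show False using D(4) by simp
    qed
  qed
  have cb: "\<forall>\<epsilon>>0. \<exists>C. \<forall>n. real (c n) \<le> C * exp (\<epsilon> * real n)"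
  proof (intro allI impI)
    fix \<epsilon> :: real assume e: "\<epsilon> > 0"
    obtain C where C: "\<forall>T. T \<subseteq> carrier G \<longrightarrow> finite T \<longrightarrow>
       (\<exists>D \<subseteq> Jset P U T. finite D \<and> \<Union>D = UNIV \<and> real (card D) \<le> C * exp (\<epsilon> * real (card T)))"
      using count_main[OF finU neU cov bad goodD e] by auto
    have "real (c n) \<le> C * exp (\<epsilon> * real n)" for n
    proof -
      obtain D where D: "D \<subseteq> join_cover \<phi> s U n" "finite D" "\<Union>D = UNIV"
        "real (card D) \<le> C * exp (\<epsilon> * real (card (s ` {1..n})))"
        using cnb[OF C, of n] by blast
      have C0: "C \<ge> 0"
      proof -
        have "0 \<le> real (card D)" by simp
        then have "0 \<le> C * exp (\<epsilon> * real (card (s ` {1..n})))" using D(4) by (rule order_trans)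
        then show ?thesis by (simp add: zero_le_mult_iff)
      qed
      have "card (s ` {1..n}) \<le> n" using card_image_le[of "{1..n}" s] by simp
      then have "exp (\<epsilon> * real (card (s ` {1..n}))) \<le> exp (\<epsilon> * real n)" using e by simp
      then have "C * exp (\<epsilon> * real (card (s ` {1..n}))) \<le> C * exp (\<epsilon> * real n)"
        using C0 by (rule mult_left_mono)
      moreover have "real (c n) \<le> real (card D)" using cle[OF D(1-3)] by simp
      ultimately show ?thesis using D(4) by linarith
    qed
    then show "\<exists>C. \<forall>n. real (c n) \<le> C * exp (\<epsilon> * real n)" by blast
  qed
  have "limsup (\<lambda>n. ereal (ln (real (c n)) / real n)) = 0" by (rule limsup_zero[OF c1 cb])
  then show "seq_entropy \<phi> U s = 0" unfolding seq_entropy_def c_def .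
qed

end
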